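(* Let $\mathcal C,\mathcal D\subseteq\{0,1\}^n$ be neural codes. Then $CF(J_{\mathcal C\cup\mathcal D})=\{h_R : h\in MP(\mathcal C,\mathcal D)\}$.
   Context: All polynomials lie in $\mathbb F_2[x_1,\dots,x_n]$. A pseudo-monomial is a polynomial $\prod_{i\in\sigma}x_i\prod_{j\in\tau}(1-x_j)$ with $\sigma,\tau\subseteq[n]$, $\sigma\cap\tau=\emptyset$. For $v\in\{0,1\}^n$ let $\rho_v=\prod_{v_i=1}x_i\prod_{v_j=0}(1-x_j)$. For a code $\mathcal C\subseteq\{0,1\}^n$, the neural ideal is $J_\mathcal C=\langle\rho_v : v\in\{0,1\}^n\setminus\mathcal C\rangle$. A pseudo-monomial $f\in J_\mathcal C$ is minimal if there is no pseudo-monomial $g\in J_\mathcal C$ of smaller degree with $f=gh$ for some polynomial $h$; the canonical form $CF(J_\mathcal C)$ is the set of all minimal pseudo-monomials in $J_\mathcal C$. A polynomial is square-free if it is a sum of monomials $x^\alpha$ with all $\alpha_i\in\{0,1\}$; every polynomial $h$ has a unique square-free polynomial $h_R$ agreeing with it as a function on $\{0,1\}^n$ (equivalently, congruent to $h$ modulo $\langle x_i^2-x_i\rangle$). If $CF(J_\mathcal C)=\{f_1,\dots,f_r\}$ and $CF(J_\mathcal D)=\{g_1,\dots,g_s\}$, the set of reduced products is $P(\mathcal C,\mathcal D)=\{(f_ig_j)_R : i\in[r], j\in[s]\}$ and the minimal reduced products are $MP(\mathcal C,\mathcal D)=\{h\in P(\mathcal C,\mathcal D): h\neq0 \text{ and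 } h\neq fg \text{ for every } f\in P(\mathcal C,\mathcal D) \text{ and every polynomial } g\neq1\}$. *)

theory Defs
  imports "HOL-Library.Poly_Mapping" "HOL-Library.Z2"
begin

text \<open>Polynomials over F2 = bit: finitely supported maps from monomials
(exponent vectors) to coefficients. Variables are x_1..x_n.\<close>

type_synonym mpoly2 = "(nat \<Rightarrow>\<^sub>0 nat) \<Rightarrow>\<^sub>0 bit"

definition Var :: "nat \<Rightarrow> mpoly2" where
  "Var i = Poly_Mapping.single (Poly_Mapping.single i 1) 1"

definition polys :: "nat \<Rightarrow> mpoly2 set" where
  "polys n = {p. \<forall>m \<in> Poly_Mapping.keys p. Poly_Mapping.keys m \<subseteq> {1..n}}"

definition tdeg :: "mpoly2 \<Rightarrow> nat" where
  "tdeg p = Max (insert 0 ((\<lambda>m. \<Sum>i\<in>Poly_Mapping.keys m. Poly_Mapping.lookup m i) ` Poly_Mapping.keys p))"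

text \<open>Points of {0,1}^n are encoded by their supports v \<subseteq> {1..n}
  (v_i = 1 iff i \<in> v).\<close>
definition cube :: "nat \<Rightarrow> nat set set" where
  "cube n = {v. v \<subseteq> {1..n}}"

definition eval :: "mpoly2 \<Rightarrow> nat set \<Rightarrow> bit" where
  "eval p v = (\<Sum>m\<in>Poly_Mapping.keys p. Poly_Mapping.lookup p m *
       (\<Prod>i\<in>Poly_Mapping.keys m. (if i \<in> v then 1 else 0) ^ Poly_Mapping.lookup m i))"

definition pseudo_mono :: "nat set \<Rightarrow> nat set \<Rightarrow> mpoly2" where
  "pseudo_mono \<sigma> \<tau> = (\<Prod>i\<in>\<sigma>. Var i) * (\<Prod>j\<in>\<tau>. 1 - Var j)"

definition is_pseudo_monomial :: "nat \<Rightarrow> mpoly2 \<Rightarrow> bool" where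
  "is_pseudo_monomial n f \<longleftrightarrow>
     (\<exists>\<sigma> \<tau>. \<sigma> \<subseteq> {1..n} \<and> \<tau> \<subseteq> {1..n} \<and> \<sigma> \<inter> \<tau> = {} \<and> f = pseudo_mono \<sigma> \<tau>)"

definition rho :: "nat \<Rightarrow> nat set \<Rightarrow> mpoly2" where
  "rho n v = pseudo_mono v ({1..n} - v)"

definition ideal_gen :: "nat \<Rightarrow> mpoly2 set \<Rightarrow> mpoly2 set" where
  "ideal_gen n S = {p. \<exists>F c. finite F \<and> F \<subseteq> S \<and> (\<forall>g\<in>F. c g \<in> polys n) \<and>
                              p = (\<Sum>g\<in>F. c g * g)}"

definition neural_ideal :: "nat \<Rightarrow> nat set set \<Rightarrow> mpoly2 set" where
  "neural_ideal n C = ideal_gen n (rho n ` (cube n - C))"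

definition canonical_form :: "nat \<Rightarrow> nat set set \<Rightarrow> mpoly2 set" where
  "canonical_form n C = {f. is_pseudo_monomial n f \<and> f \<in> neural_ideal n C \<and>
      \<not> (\<exists>g h. is_pseudo_monomial n g \<and> g \<in> neural_ideal n C \<and> tdeg g < tdeg f \<and>
              h \<in> polys n \<and> f = g * h)}"

definition square_free :: "mpoly2 \<Rightarrow> bool" where
  "square_free p \<longleftrightarrow> (\<forall>m\<in>Poly_Mapping.keys p. \<forall>i. Poly_Mapping.lookup m i \<le> 1)"

text \<open>h_R: the unique square-free polynomial agreeing with h on {0,1}^n.\<close>
definition reduce :: "nat \<Rightarrow> mpoly2 \<Rightarrow> mpoly2" where
  "reduce n h = (THE r. r \<in> polys n \<and> square_free r \<and> (\<forall>v\<in>cube n. eval r v = eval h v))"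

definition reduced_products :: "nat \<Rightarrow> nat set set \<Rightarrow> nat set set \<Rightarrow> mpoly2 set" where
  "reduced_products n C D =
     {reduce n (f * g) | f g. f \<in> canonical_form n C \<and> g \<in> canonical_form n D}"

definition min_reduced_products :: "nat \<Rightarrow> nat set set \<Rightarrow> nat set set \<Rightarrow> mpoly2 set" where
  "min_reduced_products n C D =
     {h \<in> reduced_products n C D. h \<noteq> 0 \<and>
        (\<forall>f\<in>reduced_products n C D. \<forall>g\<in>polys n. g \<noteq> 1 \<longrightarrow> h \<noteq> f * g)}"

end

theory Submission
  imports Defs
begin


declare add_bit_eq_xor[simp del] mult_bit_eq_and[simp del]

definition ind :: "nat set \<Rightarrow> (nat \<Rightarrow>\<^sub>0 nat)" where
  "ind S = (\<Sum>i\<in>S. Poly_Mapping.single i 1)"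

lemma lookup_ind: "finite S \<Longrightarrow> Poly_Mapping.lookup (ind S) i = (if i \<in> S then 1 else 0)"
  by (simp add: ind_def lookup_sum lookup_single when_def)

lemma keys_ind: "finite S \<Longrightarrow> Poly_Mapping.keys (ind S) = S"
  by (auto simp: in_keys_iff lookup_ind split: if_splits)

lemma prod_Var: "finite S \<Longrightarrow> (\<Prod>i\<in>S. Var i) = Poly_Mapping.single (ind S) 1"
proof (induction S rule: finite_induct)
  case empty then show ?case by (simp add: ind_def)
next
  case (insert x F)
  then show ?case by (simp add: Var_def mult_single ind_def)
qed

definition chi :: "nat set \<Rightarrow> (nat \<Rightarrow>\<^sub>0 nat) \<Rightarrow> bit" where
  "chi v m = (if Poly_Mapping.keys m \<subseteq> v then 1 else 0)"

lemma eval_term: "(\<Prod>i\<in>Poly_Mapping.keys m. (if i \<in> v then 1 else 0) ^ Poly_Mapping.lookup m i) = chi v m"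
proof (cases "Poly_Mapping.keys m \<subseteq> v")
  case True
  then show ?thesis by (auto simp: chi_def intro!: prod.neutral)
next
  case False
  then obtain i where i: "i \<in> Poly_Mapping.keys m" "i \<notin> v" by auto
  then have "Poly_Mapping.lookup m i \<noteq> 0" by (simp add: in_keys_iff)
  with i have "\<exists>j\<in>Poly_Mapping.keys m. (if j \<in> v then 1 else 0) ^ Poly_Mapping.lookup m j = (0::bit)"
    by (intro bexI[of _ i]) auto
  with False show ?thesis by (simp add: chi_def prod_zero_iff)
qed

lemma eval_chi: "eval p v = (\<Sum>m\<in>Poly_Mapping.keys p. Poly_Mapping.lookup p m * chi v m)"
  by (simp only: eval_def eval_term)

lemma eval_superset:
  assumes "finite S" "Poly_Mapping.keys p \<subseteq> S"
  shows "eval p v = (\<Sum>m\<in>S. Poly_Mapping.lookup p m * chi v m)"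
  unfolding eval_chi
  by (rule sum.mono_neutral_left) (use assms in \<open>auto simp: in_keys_iff\<close>)

lemma eval_add: "eval (p + q) v = eval p v + eval q v"
proof -
  let ?S = "Poly_Mapping.keys p \<union> Poly_Mapping.keys q"
  have "eval (p + q) v = (\<Sum>m\<in>?S. Poly_Mapping.lookup (p+q) m * chi v m)"
    by (rule eval_superset) (auto dest: keys_add[THEN subsetD])
  also have "\<dots> = (\<Sum>m\<in>?S. Poly_Mapping.lookup p m * chi v m) + (\<Sum>m\<in>?S. Poly_Mapping.lookup q m * chi v m)"
    by (simp add: lookup_add distrib_right sum.distrib)
  also have "\<dots> = eval p v + eval q v"
    by (subst (1 2) eval_superset[of ?S]) auto
  finally show ?thesis .
qed

lemma eval_zero [simp]: "eval 0 v = 0"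
  by (simp add: eval_def)

lemma eval_single: "eval (Poly_Mapping.single m c) v = c * chi v m"
  by (subst eval_superset[of "{m}"]) (auto simp: lookup_single)

lemma eval_sum: "finite I \<Longrightarrow> eval (\<Sum>i\<in>I. f i) v = (\<Sum>i\<in>I. eval (f i) v)"
  by (induction I rule: finite_induct) (simp_all add: eval_add)

lemma eval_uminus: "eval (- p) v = - eval p v"
proof -
  have "eval (p + - p) v = 0" by simp
  then show ?thesis by (simp only: eval_add) (metis add_eq_0_iff)
qed

lemma eval_diff: "eval (p - q) v = eval p v - eval q v"
  by (simp only: diff_conv_add_uminus eval_add eval_uminus)

lemma poly_expand: "p = (\<Sum>m\<in>Poly_Mapping.keys p. Poly_Mapping.single m (Poly_Mapping.lookup p m))"
  by (rule poly_mapping_eqI) (simp add: lookup_sum lookup_single when_def in_keys_iff)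

lemma keys_add_nat: "Poly_Mapping.keys (a + b) = Poly_Mapping.keys a \<union> Poly_Mapping.keys (b :: nat \<Rightarrow>\<^sub>0 nat)"
  by (auto simp: in_keys_iff lookup_add)

lemma chi_add: "chi v (a + b) = chi v a * chi v b"
  by (simp add: chi_def keys_add_nat)

lemma eval_mult: "eval (p * q) v = eval p v * eval q v"
proof -
  let ?P = "\<lambda>a. Poly_Mapping.lookup p a" and ?Q = "\<lambda>b. Poly_Mapping.lookup q b"
  have "p * q = (\<Sum>a\<in>Poly_Mapping.keys p. Poly_Mapping.single a (?P a)) * (\<Sum>b\<in>Poly_Mapping.keys q. Poly_Mapping.single b (?Q b))"
    by (simp only: poly_expand[symmetric])
  also have "\<dots> = (\<Sum>a\<in>Poly_Mapping.keys p. \<Sum>b\<in>Poly_Mapping.keys q. Poly_Mapping.single (a+b) (?P a * ?Q b))"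
    by (simp add: sum_product mult_single)
  finally have "eval (p*q) v = (\<Sum>a\<in>Poly_Mapping.keys p. \<Sum>b\<in>Poly_Mapping.keys q. (?P a * chi v a) * (?Q b * chi v b))"
    by (simp add: eval_sum eval_single chi_add ac_simps)
  also have "\<dots> = eval p v * eval q v"
    by (simp add: eval_chi sum_product)
  finally show ?thesis .
qed

lemma eval_one [simp]: "eval 1 v = 1"
proof -
  have "(1::mpoly2) = Poly_Mapping.single 0 1" by simp
  then show ?thesis by (metis eval_single chi_def keys_zero empty_subsetI mult_1)
qed

lemma eval_Var: "eval (Var i) v = (if i \<in> v then 1 else 0)"
  by (simp add: Var_def eval_single chi_def)

lemma eval_prod: "finite S \<Longrightarrow> eval (\<Prod>i\<in>S. f i) v = (\<Prod>i\<in>S. eval (f i) v)"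
  by (induction S rule: finite_induct) (simp_all add: eval_mult)

lemma prod_ind_bit: "finite S \<Longrightarrow> (\<Prod>i\<in>S. if P i then 1 else (0::bit)) = (if \<forall>i\<in>S. P i then 1 else 0)"
  by (induction S rule: finite_induct) auto

lemma eval_pm:
  assumes "finite \<sigma>" "finite \<tau>"
  shows "eval (pseudo_mono \<sigma> \<tau>) v = (if \<sigma> \<subseteq> v \<and> \<tau> \<inter> v = {} then 1 else 0)"
proof -
  have "\<And>j. eval (1 - Var j) v = (if j \<notin> v then 1 else 0)"
    by (simp add: eval_diff eval_Var)
  then show ?thesis using assms
    by (auto simp: pseudo_mono_def eval_mult eval_prod eval_Var prod_ind_bit)
qed



lemma one_one_mp: "(1::mpoly2) + 1 = 0"
  by (metis one_add_one bit_2_eq_0 single_one single_add single_zero)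

lemma neg_mp: "- (x::mpoly2) = x"
proof -
  have "x + x = (1 + 1) * x" by (simp add: distrib_right)
  also have "\<dots> = 0" by (simp only: one_one_mp mult_zero_left)
  finally show ?thesis by (metis add_eq_0_iff)
qed

lemma one_minus_Var: "1 - Var j = Var j + 1"
  by (metis diff_conv_add_uminus neg_mp add.commute)

lemma pm_expand:
  assumes "finite \<sigma>" "finite \<tau>" "\<sigma> \<inter> \<tau> = {}"
  shows "pseudo_mono \<sigma> \<tau> = (\<Sum>A\<in>Pow \<tau>. Poly_Mapping.single (ind (\<sigma> \<union> A)) 1)"
proof -
  have "(\<Prod>j\<in>\<tau>. 1 - Var j) = (\<Prod>j\<in>\<tau>. Var j + 1)" by (simp add: one_minus_Var)
  also have "\<dots> = (\<Sum>A\<in>Pow \<tau>. (\<Prod>j\<in>A. Var j) * (\<Prod>j\<in>\<tau>-A. 1))"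
    by (rule prod_add) (rule assms)
  finally have e: "(\<Prod>j\<in>\<tau>. 1 - Var j) = (\<Sum>A\<in>Pow \<tau>. (\<Prod>j\<in>A. Var j))" by simp
  have "pseudo_mono \<sigma> \<tau> = (\<Sum>A\<in>Pow \<tau>. (\<Prod>i\<in>\<sigma>. Var i) * (\<Prod>j\<in>A. Var j))"
    by (simp add: pseudo_mono_def e sum_distrib_left)
  also have "\<dots> = (\<Sum>A\<in>Pow \<tau>. (\<Prod>i\<in>\<sigma> \<union> A. Var i))"
  proof (rule sum.cong[OF refl])
    fix A assume "A \<in> Pow \<tau>"
    then have "finite A" "\<sigma> \<inter> A = {}" using assms finite_subset by auto
    then show "(\<Prod>i\<in>\<sigma>. Var i) * (\<Prod>j\<in>A. Var j) = (\<Prod>i\<in>\<sigma> \<union> A. Var i)"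
      using assms by (simp add: prod.union_disjoint)
  qed
  also have "\<dots> = (\<Sum>A\<in>Pow \<tau>. Poly_Mapping.single (ind (\<sigma> \<union> A)) 1)"
    by (rule sum.cong[OF refl]) (use assms finite_subset in \<open>auto intro!: prod_Var\<close>)
  finally show ?thesis .
qed

definition MS :: "nat set \<Rightarrow> nat set \<Rightarrow> (nat \<Rightarrow>\<^sub>0 nat) set" where
  "MS \<sigma> \<tau> = (\<lambda>A. ind (\<sigma> \<union> A)) ` Pow \<tau>"

lemma lookup_pm:
  assumes "finite \<sigma>" "finite \<tau>" "\<sigma> \<inter> \<tau> = {}"
  shows "Poly_Mapping.lookup (pseudo_mono \<sigma> \<tau>) m = (if m \<in> MS \<sigma> \<tau> then 1 else 0)"
proof -
  have inj: "inj_on (\<lambda>A. ind (\<sigma> \<union> A)) (Pow \<tau>)"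
  proof (rule inj_onI)
    fix A B assume AB: "A \<in> Pow \<tau>" "B \<in> Pow \<tau>" "ind (\<sigma> \<union> A) = ind (\<sigma> \<union> B)"
    then have fin: "finite (\<sigma> \<union> A)" "finite (\<sigma> \<union> B)" using assms finite_subset by auto
    from AB(3) have "Poly_Mapping.keys (ind (\<sigma> \<union> A)) = Poly_Mapping.keys (ind (\<sigma> \<union> B))" by simp
    then have "\<sigma> \<union> A = \<sigma> \<union> B" using fin by (simp add: keys_ind)
    then show "A = B" using AB assms by blast
  qed
  have "pseudo_mono \<sigma> \<tau> = (\<Sum>m\<in>MS \<sigma> \<tau>. Poly_Mapping.single m 1)"
    unfolding pm_expand[OF assms] MS_def by (simp add: sum.reindex[OF inj])
  moreover have "finite (MS \<sigma> \<tau>)" using assms by (simp add: MS_def)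
  ultimately show ?thesis
    by (simp add: lookup_sum lookup_single when_def)
qed

lemma keys_pm:
  assumes "finite \<sigma>" "finite \<tau>" "\<sigma> \<inter> \<tau> = {}"
  shows "Poly_Mapping.keys (pseudo_mono \<sigma> \<tau>) = MS \<sigma> \<tau>"
  using lookup_pm[OF assms] by (auto simp: in_keys_iff split: if_splits)

lemma pm_sqfree:
  assumes "finite \<sigma>" "finite \<tau>" "\<sigma> \<inter> \<tau> = {}"
  shows "square_free (pseudo_mono \<sigma> \<tau>)"
  unfolding square_free_def keys_pm[OF assms] MS_def
  using assms by (auto simp: lookup_ind finite_subset)

lemma pm_polys:
  assumes "\<sigma> \<subseteq> {1..n}" "\<tau> \<subseteq> {1..n}" "\<sigma> \<inter> \<tau> = {}"
  shows "pseudo_mono \<sigma> \<tau> \<in> polys n"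
proof -
  have f: "finite \<sigma>" "finite \<tau>" using assms finite_atLeastAtMost finite_subset by blast+
  have "\<forall>m\<in>MS \<sigma> \<tau>. Poly_Mapping.keys m \<subseteq> {1..n}"
  proof
    fix m assume "m \<in> MS \<sigma> \<tau>"
    then obtain A where A: "A \<subseteq> \<tau>" "m = ind (\<sigma> \<union> A)" by (auto simp: MS_def)
    then have "finite (\<sigma> \<union> A)" using f finite_subset by blast
    then show "Poly_Mapping.keys m \<subseteq> {1..n}" using A assms by (auto simp add: keys_ind)
  qed
  then show ?thesis by (simp add: polys_def keys_pm[OF f assms(3)])
qed

lemma deg_ind: "finite S \<Longrightarrow> (\<Sum>i\<in>Poly_Mapping.keys (ind S). Poly_Mapping.lookup (ind S) i) = card S"
  by (simp add: keys_ind lookup_ind)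

lemma tdeg_pm:
  assumes "finite \<sigma>" "finite \<tau>" "\<sigma> \<inter> \<tau> = {}"
  shows "tdeg (pseudo_mono \<sigma> \<tau>) = card \<sigma> + card \<tau>"
proof -
  have "(\<lambda>m. \<Sum>i\<in>Poly_Mapping.keys m. Poly_Mapping.lookup m i) ` MS \<sigma> \<tau> = (\<lambda>A. card (\<sigma> \<union> A)) ` Pow \<tau>"
    unfolding MS_def image_image
  proof (rule image_cong[OF refl])
    fix A assume "A \<in> Pow \<tau>"
    then have "finite (\<sigma> \<union> A)" using assms by (auto intro: finite_subset)
    then show "(\<lambda>m. \<Sum>i\<in>Poly_Mapping.keys m. Poly_Mapping.lookup m i) (ind (\<sigma> \<union> A)) = card (\<sigma> \<union> A)"
      by (rule deg_ind)
  qed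
  then have "tdeg (pseudo_mono \<sigma> \<tau>) = Max (insert 0 ((\<lambda>A. card (\<sigma> \<union> A)) ` Pow \<tau>))"
    unfolding tdeg_def keys_pm[OF assms] by simp
  also have "\<dots> = card (\<sigma> \<union> \<tau>)"
  proof (rule Max_eqI)
    show "finite (insert 0 ((\<lambda>A. card (\<sigma> \<union> A)) ` Pow \<tau>))" using assms by simp
    show "card (\<sigma> \<union> \<tau>) \<in> insert 0 ((\<lambda>A. card (\<sigma> \<union> A)) ` Pow \<tau>)" by auto
    fix y assume "y \<in> insert 0 ((\<lambda>A. card (\<sigma> \<union> A)) ` Pow \<tau>)"
    then show "y \<le> card (\<sigma> \<union> \<tau>)" using assms by (auto intro!: card_mono)
  qed
  also have "\<dots> = card \<sigma> + card \<tau>" using assms by (simp add: card_Un_disjoint)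
  finally show ?thesis .
qed



lemma sqfree_keys_eq:
  assumes "square_free p" "m \<in> Poly_Mapping.keys p" "m' \<in> Poly_Mapping.keys p"
    "Poly_Mapping.keys m = Poly_Mapping.keys m'"
  shows "m = m'"
proof (rule poly_mapping_eqI)
  fix i
  have a: "Poly_Mapping.lookup m i \<le> 1" "Poly_Mapping.lookup m' i \<le> 1"
    using assms unfolding square_free_def by blast+
  show "Poly_Mapping.lookup m i = Poly_Mapping.lookup m' i"
  proof (cases "i \<in> Poly_Mapping.keys m")
    case True
    then have "i \<in> Poly_Mapping.keys m'" using assms by simp
    with True a show ?thesis by (simp add: in_keys_iff)
  next
    case False
    then have "i \<notin> Poly_Mapping.keys m'" using assms by simp
    with False show ?thesis by (simp add: in_keys_iff)
  qed
qed

lemma sqfree_unique: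
  assumes "r \<in> polys n" "square_free r" "\<forall>v\<in>cube n. eval r v = 0"
  shows "r = 0"
proof (rule ccontr)
  assume "r \<noteq> 0"
  then have ne: "Poly_Mapping.keys r \<noteq> {}" by simp
  define k where "k = Min ((\<lambda>m. card (Poly_Mapping.keys m)) ` Poly_Mapping.keys r)"
  have "k \<in> (\<lambda>m. card (Poly_Mapping.keys m)) ` Poly_Mapping.keys r"
    unfolding k_def using ne by (intro Min_in) auto
  then obtain m where m: "m \<in> Poly_Mapping.keys r" "card (Poly_Mapping.keys m) = k" by auto
  have kmin: "\<And>m'. m' \<in> Poly_Mapping.keys r \<Longrightarrow> k \<le> card (Poly_Mapping.keys m')"
    unfolding k_def by (intro Min_le) auto
  let ?v = "Poly_Mapping.keys m"
  have "?v \<subseteq> {1..n}" using assms(1) m(1) by (auto simp: polys_def)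
  then have vc: "?v \<in> cube n" by (simp add: cube_def)
  have "eval r ?v = (\<Sum>m'\<in>Poly_Mapping.keys r. if m' = m then Poly_Mapping.lookup r m else 0)"
    unfolding eval_chi
  proof (rule sum.cong[OF refl])
    fix m' assume m': "m' \<in> Poly_Mapping.keys r"
    show "Poly_Mapping.lookup r m' * chi ?v m' = (if m' = m then Poly_Mapping.lookup r m else 0)"
    proof (cases "m' = m")
      case True then show ?thesis by (simp add: chi_def)
    next
      case False
      have "\<not> Poly_Mapping.keys m' \<subseteq> ?v"
      proof
        assume sub: "Poly_Mapping.keys m' \<subseteq> ?v"
        show False
        proof (cases "Poly_Mapping.keys m' = ?v")
          case True
          then show False using sqfree_keys_eq[OF assms(2) m' m(1)] False by simp
        next
          case False
          then have "card (Poly_Mapping.keys m') < card ?v"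
            using sub by (intro psubset_card_mono) auto
          then show False using kmin[OF m'] m(2) by simp
        qed
      qed
      then show ?thesis using False by (simp add: chi_def)
    qed
  qed
  also have "\<dots> = Poly_Mapping.lookup r m" using m(1) by simp
  finally have "eval r ?v \<noteq> 0" using m(1) by (simp add: in_keys_iff)
  with assms(3) vc show False by blast
qed

lemma keys_diff_sub: "Poly_Mapping.keys (a - b) \<subseteq> Poly_Mapping.keys a \<union> Poly_Mapping.keys (b::mpoly2)"
  by (auto simp: in_keys_iff lookup_minus)

lemma reduce_eq:
  assumes "r \<in> polys n" "square_free r" "\<forall>v\<in>cube n. eval r v = eval h v"
  shows "reduce n h = r"
  unfolding reduce_def
proof (rule the_equality)
  show "r \<in> polys n \<and> square_free r \<and> (\<forall>v\<in>cube n. eval r v = eval h v)" using assms by blast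
  fix r' assume r': "r' \<in> polys n \<and> square_free r' \<and> (\<forall>v\<in>cube n. eval r' v = eval h v)"
  have "r' - r = 0"
  proof (rule sqfree_unique)
    show "r' - r \<in> polys n" using r' assms(1) keys_diff_sub[of r' r] unfolding polys_def by blast
    show "square_free (r' - r)" using r' assms(2) keys_diff_sub[of r' r] unfolding square_free_def by blast
    show "\<forall>v\<in>cube n. eval (r' - r) v = 0" using r' assms(3) by (simp add: eval_diff)
  qed
  then show "r' = r" by simp
qed

lemma zero_polys: "0 \<in> polys n" by (simp add: polys_def)
lemma zero_sqfree: "square_free 0" by (simp add: square_free_def)

lemma reduce_pm:
  assumes "\<sigma> \<subseteq> {1..n}" "\<tau> \<subseteq> {1..n}" "\<sigma> \<inter> \<tau> = {}"
  shows "reduce n (pseudo_mono \<sigma> \<tau>) = pseudo_mono \<sigma> \<tau>"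
proof -
  have f: "finite \<sigma>" "finite \<tau>" using assms finite_atLeastAtMost finite_subset by blast+
  show ?thesis by (rule reduce_eq) (use pm_polys[OF assms] pm_sqfree[OF f assms(3)] in auto)
qed

lemma reduce_pm_mult:
  assumes "\<sigma>1 \<subseteq> {1..n}" "\<tau>1 \<subseteq> {1..n}" "\<sigma>1 \<inter> \<tau>1 = {}"
    "\<sigma>2 \<subseteq> {1..n}" "\<tau>2 \<subseteq> {1..n}" "\<sigma>2 \<inter> \<tau>2 = {}"
  shows "reduce n (pseudo_mono \<sigma>1 \<tau>1 * pseudo_mono \<sigma>2 \<tau>2) =
    (if (\<sigma>1 \<union> \<sigma>2) \<inter> (\<tau>1 \<union> \<tau>2) = {} then pseudo_mono (\<sigma>1 \<union> \<sigma>2) (\<tau>1 \<union> \<tau>2) else 0)"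
proof -
  have f: "finite \<sigma>1" "finite \<tau>1" "finite \<sigma>2" "finite \<tau>2"
    using assms finite_atLeastAtMost finite_subset by blast+
  have ev: "eval (pseudo_mono \<sigma>1 \<tau>1 * pseudo_mono \<sigma>2 \<tau>2) v =
     (if \<sigma>1 \<union> \<sigma>2 \<subseteq> v \<and> (\<tau>1 \<union> \<tau>2) \<inter> v = {} then 1 else 0)" for v
    using f by (simp add: eval_mult eval_pm) blast
  show ?thesis
  proof (cases "(\<sigma>1 \<union> \<sigma>2) \<inter> (\<tau>1 \<union> \<tau>2) = {}")
    case True
    have a: "\<sigma>1 \<union> \<sigma>2 \<subseteq> {1..n}" "\<tau>1 \<union> \<tau>2 \<subseteq> {1..n}" using assms by auto
    have f2: "finite (\<sigma>1 \<union> \<sigma>2)" "finite (\<tau>1 \<union> \<tau>2)" using f by auto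
    show ?thesis using True
      by (simp, intro reduce_eq) (use pm_polys[OF a True] pm_sqfree[OF f2 True] in \<open>auto simp: ev eval_pm[OF f2]\<close>)
  next
    case False
    have "eval (pseudo_mono \<sigma>1 \<tau>1 * pseudo_mono \<sigma>2 \<tau>2) v = 0" for v
      unfolding ev using False by auto
    then show ?thesis using False
      by (simp, intro reduce_eq) (auto simp: zero_polys zero_sqfree)
  qed
qed

lemma pm_nonzero:
  assumes "finite \<sigma>" "finite \<tau>" "\<sigma> \<inter> \<tau> = {}"
  shows "pseudo_mono \<sigma> \<tau> \<noteq> 0"
proof
  assume "pseudo_mono \<sigma> \<tau> = 0"
  then have "eval (pseudo_mono \<sigma> \<tau>) \<sigma> = 0" by simp
  then show False using assms by (simp add: eval_pm inf_commute)
qed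

lemma pm_dvd:
  assumes "finite \<sigma>" "finite \<tau>" "finite \<sigma>'" "finite \<tau>'"
    "\<sigma>' \<inter> \<tau>' = {}" "\<sigma>' \<subseteq> {1..n}" "\<tau> \<subseteq> {1..n}"
    "pseudo_mono \<sigma>' \<tau>' = pseudo_mono \<sigma> \<tau> * h"
  shows "\<sigma> \<subseteq> \<sigma>' \<and> \<tau> \<subseteq> \<tau>'"
proof -
  have e: "eval (pseudo_mono \<sigma>' \<tau>') v = eval (pseudo_mono \<sigma> \<tau>) v * eval h v" for v
    using assms(8) by (simp add: eval_mult)
  have "eval (pseudo_mono \<sigma>' \<tau>') \<sigma>' = 1" using assms(1-7) by (simp add: eval_pm inf_commute)
  then have "eval (pseudo_mono \<sigma> \<tau>) \<sigma>' \<noteq> 0" using e[of \<sigma>'] by (metis mult_zero_left zero_neq_one)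
  then have 1: "\<sigma> \<subseteq> \<sigma>'" using assms by (simp add: eval_pm split: if_splits)
  let ?w = "{1..n} - \<tau>'"
  have "eval (pseudo_mono \<sigma>' \<tau>') ?w = 1" using assms(1-7) by (auto simp: eval_pm)
  then have "eval (pseudo_mono \<sigma> \<tau>) ?w \<noteq> 0" using e[of ?w] by (metis mult_zero_left zero_neq_one)
  then have "\<tau> \<inter> ?w = {}" using assms by (simp add: eval_pm split: if_splits)
  then have "\<tau> \<subseteq> \<tau>'" using assms(7) by blast
  with 1 show ?thesis by blast
qed

lemma pm_split:
  assumes "finite \<sigma>'" "finite \<tau>'" "\<sigma> \<subseteq> \<sigma>'" "\<tau> \<subseteq> \<tau>'"
  shows "pseudo_mono \<sigma>' \<tau>' = pseudo_mono \<sigma> \<tau> * pseudo_mono (\<sigma>' - \<sigma>) (\<tau>' - \<tau>)"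
proof -
  have "(\<Prod>i\<in>\<sigma>'. Var i) = (\<Prod>i\<in>\<sigma>' - \<sigma>. Var i) * (\<Prod>i\<in>\<sigma>. Var i)"
    using assms by (intro prod.subset_diff) auto
  moreover have "(\<Prod>i\<in>\<tau>'. 1 - Var i) = (\<Prod>i\<in>\<tau>' - \<tau>. 1 - Var i) * (\<Prod>i\<in>\<tau>. 1 - Var i)"
    using assms by (intro prod.subset_diff) auto
  ultimately show ?thesis by (simp add: pseudo_mono_def ac_simps)
qed

lemma pm_eq_one:
  assumes "finite \<sigma>" "finite \<tau>" "\<sigma> \<inter> \<tau> = {}" "\<sigma> \<subseteq> {1..n}" "\<tau> \<subseteq> {1..n}"
    "pseudo_mono \<sigma> \<tau> = 1"
  shows "\<sigma> = {} \<and> \<tau> = {}"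
proof -
  have "pseudo_mono {} {} = pseudo_mono \<sigma> \<tau> * 1" using assms(6) by (simp add: pseudo_mono_def)
  from pm_dvd[OF assms(1,2) _ _ _ _ assms(5) this] show ?thesis by auto
qed



lemma fin_sub: "S \<subseteq> {1..(n::nat)} \<Longrightarrow> finite S"
  using finite_atLeastAtMost finite_subset by blast

lemma ideal_vanish:
  assumes "C \<subseteq> cube n" "p \<in> neural_ideal n C" "c \<in> C"
  shows "eval p c = 0"
proof -
  obtain F cf where F: "finite F" "F \<subseteq> rho n ` (cube n - C)" "p = (\<Sum>g\<in>F. cf g * g)"
    using assms(2) unfolding neural_ideal_def ideal_gen_def by blast
  have cn: "c \<subseteq> {1..n}" using assms by (auto simp: cube_def)
  have "eval g c = 0" if "g \<in> F" for g
  proof -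
    obtain v where v: "v \<in> cube n" "v \<notin> C" "g = rho n v" using F(2) \<open>g \<in> F\<close> by auto
    have vn: "v \<subseteq> {1..n}" using v by (simp add: cube_def)
    have "\<not> (v \<subseteq> c \<and> ({1..n} - v) \<inter> c = {})"
    proof
      assume "v \<subseteq> c \<and> ({1..n} - v) \<inter> c = {}"
      then have "v = c" using cn by blast
      then show False using v assms(3) by simp
    qed
    then show ?thesis using v(3) vn by (simp add: rho_def eval_pm fin_sub)
  qed
  then show ?thesis using F by (simp add: eval_sum eval_mult)
qed

lemma one_polys: "1 \<in> polys n" by (simp add: polys_def)

lemma rho_inj:
  assumes "v \<subseteq> {1..n}" "w \<subseteq> {1..n}" "rho n v = rho n w"
  shows "v = w"
proof -
  have f: "finite v" "finite w" "finite ({1..n} - v)" "finite ({1..n} - w)"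
    using assms fin_sub by auto
  have d: "v \<inter> ({1..n} - v) = {}" "w \<inter> ({1..n} - w) = {}" by auto
  have c: "{1..n} - v \<subseteq> {1..n}" "{1..n} - w \<subseteq> {1..n}" by auto
  have e1: "pseudo_mono v ({1..n} - v) = pseudo_mono w ({1..n} - w) * 1"
    using assms(3) by (simp add: rho_def)
  have e2: "pseudo_mono w ({1..n} - w) = pseudo_mono v ({1..n} - v) * 1"
    using assms(3) by (simp add: rho_def)
  have "w \<subseteq> v" using pm_dvd[OF f(2) f(4) f(1) f(3) d(1) assms(1) c(2) e1] by blast
  moreover have "v \<subseteq> w" using pm_dvd[OF f(1) f(3) f(2) f(4) d(2) assms(2) c(1) e2] by blast
  ultimately show ?thesis by blast
qed

lemma pm_in_ideal_iff:
  assumes "C \<subseteq> cube n" "\<sigma> \<subseteq> {1..n}" "\<tau> \<subseteq> {1..n}" "\<sigma> \<inter> \<tau> = {}"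
  shows "pseudo_mono \<sigma> \<tau> \<in> neural_ideal n C \<longleftrightarrow> (\<forall>c\<in>C. \<not> (\<sigma> \<subseteq> c \<and> \<tau> \<inter> c = {}))"
proof
  assume "pseudo_mono \<sigma> \<tau> \<in> neural_ideal n C"
  then show "\<forall>c\<in>C. \<not> (\<sigma> \<subseteq> c \<and> \<tau> \<inter> c = {})"
  proof (intro ballI notI)
    fix c assume c: "c \<in> C" "\<sigma> \<subseteq> c \<and> \<tau> \<inter> c = {}"
    have z: "eval (pseudo_mono \<sigma> \<tau>) c = 0" using ideal_vanish[OF assms(1) \<open>pseudo_mono \<sigma> \<tau> \<in> neural_ideal n C\<close> c(1)] .
    have f: "finite \<sigma>" "finite \<tau>" using assms(2,3) fin_sub by auto
    have "eval (pseudo_mono \<sigma> \<tau>) c = (if \<sigma> \<subseteq> c \<and> \<tau> \<inter> c = {} then 1 else 0)" by (rule eval_pm[OF f])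
    then have "eval (pseudo_mono \<sigma> \<tau>) c = 1" using c(2) by simp
    with z show False by simp
  qed
next
  assume van: "\<forall>c\<in>C. \<not> (\<sigma> \<subseteq> c \<and> \<tau> \<inter> c = {})"
  define R where "R = {1..n} - \<sigma> - \<tau>"
  have fR: "finite R" by (simp add: R_def)
  have fs: "finite \<sigma>" "finite \<tau>" using assms fin_sub by auto
  have "(\<Prod>k\<in>R. Var k + (1 - Var k)) = (\<Sum>A\<in>Pow R. (\<Prod>k\<in>A. Var k) * (\<Prod>k\<in>R-A. 1 - Var k))"
    by (rule prod_add[OF fR])
  then have e1: "(1::mpoly2) = (\<Sum>A\<in>Pow R. pseudo_mono A (R - A))"
    by (simp add: pseudo_mono_def)
  have e2: "pseudo_mono \<sigma> \<tau> * pseudo_mono A (R - A) = rho n (\<sigma> \<union> A)" if "A \<in> Pow R" for A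
  proof -
    have "rho n (\<sigma> \<union> A) = pseudo_mono (\<sigma> \<union> A) (\<tau> \<union> (R - A))"
      unfolding rho_def using that assms by (intro arg_cong[where f="pseudo_mono _"]) (auto simp: R_def)
    also have "\<dots> = pseudo_mono \<sigma> \<tau> * pseudo_mono ((\<sigma> \<union> A) - \<sigma>) ((\<tau> \<union> (R - A)) - \<tau>)"
      using fs fR that by (intro pm_split) (auto intro: finite_subset)
    also have "(\<sigma> \<union> A) - \<sigma> = A" using that by (auto simp: R_def)
    also have "(\<tau> \<union> (R - A)) - \<tau> = R - A" by (auto simp: R_def)
    finally show ?thesis by simp
  qed
  have "pseudo_mono \<sigma> \<tau> = pseudo_mono \<sigma> \<tau> * 1" by simp
  also have "\<dots> = pseudo_mono \<sigma> \<tau> * (\<Sum>A\<in>Pow R. pseudo_mono A (R - A))"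
    by (simp only: e1[symmetric])
  also have "\<dots> = (\<Sum>A\<in>Pow R. pseudo_mono \<sigma> \<tau> * pseudo_mono A (R - A))"
    by (rule sum_distrib_left)
  also have "\<dots> = (\<Sum>A\<in>Pow R. rho n (\<sigma> \<union> A))"
    by (rule sum.cong[OF refl]) (rule e2)
  finally have ps: "pseudo_mono \<sigma> \<tau> = (\<Sum>A\<in>Pow R. rho n (\<sigma> \<union> A))" .
  have inj: "inj_on (\<lambda>A. rho n (\<sigma> \<union> A)) (Pow R)"
  proof (rule inj_onI)
    fix A B assume AB: "A \<in> Pow R" "B \<in> Pow R" "rho n (\<sigma> \<union> A) = rho n (\<sigma> \<union> B)"
    have a: "\<sigma> \<union> A \<subseteq> {1..n}" "\<sigma> \<union> B \<subseteq> {1..n}" using AB assms by (auto simp: R_def)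
    have "\<sigma> \<union> A = \<sigma> \<union> B" by (rule rho_inj[OF a AB(3)])
    then show "A = B" using AB by (auto simp: R_def)
  qed
  let ?F = "(\<lambda>A. rho n (\<sigma> \<union> A)) ` Pow R"
  have "?F \<subseteq> rho n ` (cube n - C)"
  proof
    fix g assume "g \<in> ?F"
    then obtain A where A: "A \<subseteq> R" "g = rho n (\<sigma> \<union> A)" by auto
    have "\<sigma> \<union> A \<in> cube n" using A assms by (auto simp: cube_def R_def)
    moreover have "\<sigma> \<union> A \<notin> C"
    proof
      assume "\<sigma> \<union> A \<in> C"
      moreover have "\<tau> \<inter> (\<sigma> \<union> A) = {}" using A assms by (auto simp: R_def)
      ultimately show False using van by blast
    qed
    ultimately show "g \<in> rho n ` (cube n - C)" using A by blast
  qed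
  moreover have eqF: "pseudo_mono \<sigma> \<tau> = (\<Sum>g\<in>?F. (\<lambda>_. 1) g * g)"
  proof -
    have "(\<Sum>g\<in>?F. (\<lambda>_. 1::mpoly2) g * g) = (\<Sum>g\<in>?F. g)" by simp
    also have "\<dots> = (\<Sum>A\<in>Pow R. rho n (\<sigma> \<union> A))" by (rule sum.reindex[OF inj, unfolded comp_def])
    finally show ?thesis using ps by simp
  qed
  moreover have "finite ?F" using fR by simp
  moreover have "\<forall>g\<in>?F. (\<lambda>_. 1::mpoly2) g \<in> polys n" using one_polys by simp
  ultimately have "\<exists>F c. finite F \<and> F \<subseteq> rho n ` (cube n - C) \<and> (\<forall>g\<in>F. c g \<in> polys n) \<and>
                              pseudo_mono \<sigma> \<tau> = (\<Sum>g\<in>F. c g * g)"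
    by (intro exI[of _ ?F] exI[of _ "\<lambda>_. 1::mpoly2"] conjI)
  then show "pseudo_mono \<sigma> \<tau> \<in> neural_ideal n C"
    unfolding neural_ideal_def ideal_gen_def by (rule CollectI)
qed

lemma exist_cf:
  assumes "C \<subseteq> cube n" "\<sigma> \<subseteq> {1..n}" "\<tau> \<subseteq> {1..n}" "\<sigma> \<inter> \<tau> = {}"
    "pseudo_mono \<sigma> \<tau> \<in> neural_ideal n C"
  shows "\<exists>\<sigma>' \<tau>'. \<sigma>' \<subseteq> \<sigma> \<and> \<tau>' \<subseteq> \<tau> \<and> pseudo_mono \<sigma>' \<tau>' \<in> canonical_form n C"
  using assms(2-5)
proof (induction "card \<sigma> + card \<tau>" arbitrary: \<sigma> \<tau> rule: less_induct)
  case less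
  show ?case
  proof (cases "pseudo_mono \<sigma> \<tau> \<in> canonical_form n C")
    case True then show ?thesis by (intro exI[of _ \<sigma>] exI[of _ \<tau>] conjI) auto
  next
    case False
    have ispm: "is_pseudo_monomial n (pseudo_mono \<sigma> \<tau>)"
      unfolding is_pseudo_monomial_def using less.prems(1-3) by blast
    have "\<not> (is_pseudo_monomial n (pseudo_mono \<sigma> \<tau>) \<and> pseudo_mono \<sigma> \<tau> \<in> neural_ideal n C \<and>
      \<not> (\<exists>g h. is_pseudo_monomial n g \<and> g \<in> neural_ideal n C \<and> tdeg g < tdeg (pseudo_mono \<sigma> \<tau>) \<and>
              h \<in> polys n \<and> pseudo_mono \<sigma> \<tau> = g * h))"
      using False unfolding canonical_form_def mem_Collect_eq by assumption
    then have "\<exists>g h. is_pseudo_monomial n g \<and> g \<in> neural_ideal n C \<and> tdeg g < tdeg (pseudo_mono \<sigma> \<tau>) \<and>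
              h \<in> polys n \<and> pseudo_mono \<sigma> \<tau> = g * h"
      using ispm less.prems(4) by blast
    then obtain g h where gh: "is_pseudo_monomial n g" "g \<in> neural_ideal n C"
      "tdeg g < tdeg (pseudo_mono \<sigma> \<tau>)" "h \<in> polys n" "pseudo_mono \<sigma> \<tau> = g * h"
      by blast
    from gh(1) obtain \<sigma>g \<tau>g where g: "\<sigma>g \<subseteq> {1..n}" "\<tau>g \<subseteq> {1..n}" "\<sigma>g \<inter> \<tau>g = {}" "g = pseudo_mono \<sigma>g \<tau>g"
      unfolding is_pseudo_monomial_def by blast
    have fg: "finite \<sigma>g" "finite \<tau>g" "finite \<sigma>" "finite \<tau>"
      using fin_sub[OF g(1)] fin_sub[OF g(2)] fin_sub[OF less.prems(1)] fin_sub[OF less.prems(2)] by auto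
    have eq: "pseudo_mono \<sigma> \<tau> = pseudo_mono \<sigma>g \<tau>g * h" using gh(5) g(4) by simp
    have sub: "\<sigma>g \<subseteq> \<sigma> \<and> \<tau>g \<subseteq> \<tau>"
      by (rule pm_dvd[OF fg less.prems(3) less.prems(1) g(2) eq])
    have "tdeg (pseudo_mono \<sigma>g \<tau>g) < tdeg (pseudo_mono \<sigma> \<tau>)" using gh(3) g(4) by simp
    then have lt: "card \<sigma>g + card \<tau>g < card \<sigma> + card \<tau>"
      by (simp only: tdeg_pm[OF fg(1,2) g(3)] tdeg_pm[OF fg(3,4) less.prems(3)])
    have inJ: "pseudo_mono \<sigma>g \<tau>g \<in> neural_ideal n C" using gh(2) g(4) by simp
    have "\<exists>\<sigma>' \<tau>'. \<sigma>' \<subseteq> \<sigma>g \<and> \<tau>' \<subseteq> \<tau>g \<and> pseudo_mono \<sigma>' \<tau>' \<in> canonical_form n C"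
      by (rule less.hyps[OF lt g(1) g(2) g(3) inJ])
    then obtain \<sigma>' \<tau>' where o:
      "\<sigma>' \<subseteq> \<sigma>g" "\<tau>' \<subseteq> \<tau>g" "pseudo_mono \<sigma>' \<tau>' \<in> canonical_form n C"
      by blast
    have "\<sigma>' \<subseteq> \<sigma>" "\<tau>' \<subseteq> \<tau>" using o(1,2) sub by auto
    then show ?thesis using o(3) by (intro exI[of _ \<sigma>'] exI[of _ \<tau>'] conjI)
  qed
qed



lemma cf_repr:
  assumes "f \<in> canonical_form n C"
  obtains \<sigma> \<tau> where "\<sigma> \<subseteq> {1..n}" "\<tau> \<subseteq> {1..n}" "\<sigma> \<inter> \<tau> = {}" "f = pseudo_mono \<sigma> \<tau>"
  using assms unfolding canonical_form_def is_pseudo_monomial_def by blast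

lemma cf_in: "f \<in> canonical_form n C \<Longrightarrow> f \<in> neural_ideal n C"
  unfolding canonical_form_def by blast

lemma cf_min:
  assumes "f \<in> canonical_form n C" "is_pseudo_monomial n g" "g \<in> neural_ideal n C"
    "h \<in> polys n" "f = g * h"
  shows "\<not> tdeg g < tdeg f"
proof
  assume "tdeg g < tdeg f"
  with assms have "\<exists>g h. is_pseudo_monomial n g \<and> g \<in> neural_ideal n C \<and> tdeg g < tdeg f \<and>
              h \<in> polys n \<and> f = g * h" by (intro exI[of _ g] exI[of _ h] conjI)
  moreover have "\<not> (\<exists>g h. is_pseudo_monomial n g \<and> g \<in> neural_ideal n C \<and> tdeg g < tdeg f \<and>
              h \<in> polys n \<and> f = g * h)"
    using assms(1) unfolding canonical_form_def mem_Collect_eq by (elim conjE)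
  ultimately show False by contradiction
qed

lemma J_mono:
  assumes "C \<subseteq> cube n" "\<sigma>' \<subseteq> {1..n}" "\<tau>' \<subseteq> {1..n}" "\<sigma>' \<inter> \<tau>' = {}"
    "\<sigma> \<subseteq> \<sigma>'" "\<tau> \<subseteq> \<tau>'" "pseudo_mono \<sigma> \<tau> \<in> neural_ideal n C"
  shows "pseudo_mono \<sigma>' \<tau>' \<in> neural_ideal n C"
proof -
  have v: "\<sigma> \<subseteq> {1..n}" "\<tau> \<subseteq> {1..n}" "\<sigma> \<inter> \<tau> = {}" using assms by auto
  have "\<forall>c\<in>C. \<not> (\<sigma> \<subseteq> c \<and> \<tau> \<inter> c = {})" using pm_in_ideal_iff[OF assms(1) v] assms(7) by simp
  then have "\<forall>c\<in>C. \<not> (\<sigma>' \<subseteq> c \<and> \<tau>' \<inter> c = {})"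
  proof (intro ballI notI)
    fix c assume "\<forall>c\<in>C. \<not> (\<sigma> \<subseteq> c \<and> \<tau> \<inter> c = {})" "c \<in> C" "\<sigma>' \<subseteq> c \<and> \<tau>' \<inter> c = {}"
    moreover have "\<sigma> \<subseteq> c" "\<tau> \<inter> c = {}" using assms(5,6) \<open>\<sigma>' \<subseteq> c \<and> \<tau>' \<inter> c = {}\<close> by auto
    ultimately show False by auto
  qed
  then show ?thesis using pm_in_ideal_iff[OF assms(1-4)] by simp
qed

lemma J_union:
  assumes "C \<subseteq> cube n" "D \<subseteq> cube n" "\<sigma> \<subseteq> {1..n}" "\<tau> \<subseteq> {1..n}" "\<sigma> \<inter> \<tau> = {}"
  shows "pseudo_mono \<sigma> \<tau> \<in> neural_ideal n (C \<union> D) \<longleftrightarrow>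
    pseudo_mono \<sigma> \<tau> \<in> neural_ideal n C \<and> pseudo_mono \<sigma> \<tau> \<in> neural_ideal n D"
proof -
  have "C \<union> D \<subseteq> cube n" using assms by auto
  have "(\<forall>c\<in>C \<union> D. \<not> (\<sigma> \<subseteq> c \<and> \<tau> \<inter> c = {})) \<longleftrightarrow>
    (\<forall>c\<in>C. \<not> (\<sigma> \<subseteq> c \<and> \<tau> \<inter> c = {})) \<and> (\<forall>c\<in>D. \<not> (\<sigma> \<subseteq> c \<and> \<tau> \<inter> c = {}))"
    by (rule ball_Un)
  then show ?thesis
    by (simp only: pm_in_ideal_iff[OF \<open>C \<union> D \<subseteq> cube n\<close> assms(3-5)] pm_in_ideal_iff[OF assms(1) assms(3-5)] pm_in_ideal_iff[OF assms(2) assms(3-5)])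
qed

lemma P_intro:
  assumes "pseudo_mono \<sigma>1 \<tau>1 \<in> canonical_form n C" "pseudo_mono \<sigma>2 \<tau>2 \<in> canonical_form n D"
    "\<sigma>1 \<subseteq> {1..n}" "\<tau>1 \<subseteq> {1..n}" "\<sigma>1 \<inter> \<tau>1 = {}"
    "\<sigma>2 \<subseteq> {1..n}" "\<tau>2 \<subseteq> {1..n}" "\<sigma>2 \<inter> \<tau>2 = {}"
    "(\<sigma>1 \<union> \<sigma>2) \<inter> (\<tau>1 \<union> \<tau>2) = {}"
  shows "pseudo_mono (\<sigma>1 \<union> \<sigma>2) (\<tau>1 \<union> \<tau>2) \<in> reduced_products n C D"
proof -
  have "reduce n (pseudo_mono \<sigma>1 \<tau>1 * pseudo_mono \<sigma>2 \<tau>2) = pseudo_mono (\<sigma>1 \<union> \<sigma>2) (\<tau>1 \<union> \<tau>2)"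
    using reduce_pm_mult[OF assms(3-8)] assms(9) by simp
  then show ?thesis unfolding reduced_products_def mem_Collect_eq
    by (intro exI[of _ "pseudo_mono \<sigma>1 \<tau>1"] exI[of _ "pseudo_mono \<sigma>2 \<tau>2"] conjI) (use assms(1,2) in auto)
qed

lemma P_elem:
  assumes "C \<subseteq> cube n" "D \<subseteq> cube n" "h \<in> reduced_products n C D" "h \<noteq> 0"
  obtains \<sigma> \<tau> where "\<sigma> \<subseteq> {1..n}" "\<tau> \<subseteq> {1..n}" "\<sigma> \<inter> \<tau> = {}" "h = pseudo_mono \<sigma> \<tau>"
    "pseudo_mono \<sigma> \<tau> \<in> neural_ideal n (C \<union> D)"
proof -
  obtain f g where fg: "h = reduce n (f * g)" "f \<in> canonical_form n C" "g \<in> canonical_form n D"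
  proof -
    have "\<exists>f g. h = reduce n (f * g) \<and> f \<in> canonical_form n C \<and> g \<in> canonical_form n D"
      using assms(3) unfolding reduced_products_def by simp
    then show ?thesis using that by metis
  qed
  obtain \<sigma>1 \<tau>1 where s1: "\<sigma>1 \<subseteq> {1..n}" "\<tau>1 \<subseteq> {1..n}" "\<sigma>1 \<inter> \<tau>1 = {}" "f = pseudo_mono \<sigma>1 \<tau>1"
    by (rule cf_repr[OF fg(2)])
  obtain \<sigma>2 \<tau>2 where s2: "\<sigma>2 \<subseteq> {1..n}" "\<tau>2 \<subseteq> {1..n}" "\<sigma>2 \<inter> \<tau>2 = {}" "g = pseudo_mono \<sigma>2 \<tau>2"
    by (rule cf_repr[OF fg(3)])
  have r: "h = (if (\<sigma>1 \<union> \<sigma>2) \<inter> (\<tau>1 \<union> \<tau>2) = {} then pseudo_mono (\<sigma>1 \<union> \<sigma>2) (\<tau>1 \<union> \<tau>2) else 0)"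
    using reduce_pm_mult[OF s1(1-3) s2(1-3)] fg(1) s1(4) s2(4) by simp
  then have d: "(\<sigma>1 \<union> \<sigma>2) \<inter> (\<tau>1 \<union> \<tau>2) = {}" using assms(4) by (auto split: if_splits)
  with r have h: "h = pseudo_mono (\<sigma>1 \<union> \<sigma>2) (\<tau>1 \<union> \<tau>2)" by simp
  have v: "\<sigma>1 \<union> \<sigma>2 \<subseteq> {1..n}" "\<tau>1 \<union> \<tau>2 \<subseteq> {1..n}" using s1 s2 by auto
  have "pseudo_mono (\<sigma>1 \<union> \<sigma>2) (\<tau>1 \<union> \<tau>2) \<in> neural_ideal n C"
    by (rule J_mono[OF assms(1) v d]) (use cf_in[OF fg(2)] s1(4) in auto)
  moreover have "pseudo_mono (\<sigma>1 \<union> \<sigma>2) (\<tau>1 \<union> \<tau>2) \<in> neural_ideal n D"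
    by (rule J_mono[OF assms(2) v d]) (use cf_in[OF fg(3)] s2(4) in auto)
  ultimately have "pseudo_mono (\<sigma>1 \<union> \<sigma>2) (\<tau>1 \<union> \<tau>2) \<in> neural_ideal n (C \<union> D)"
    using J_union[OF assms(1,2) v d] by simp
  then show ?thesis by (rule that[OF v d h])
qed

lemma below:
  assumes "C \<subseteq> cube n" "D \<subseteq> cube n" "\<sigma> \<subseteq> {1..n}" "\<tau> \<subseteq> {1..n}" "\<sigma> \<inter> \<tau> = {}"
    "pseudo_mono \<sigma> \<tau> \<in> neural_ideal n (C \<union> D)"
  obtains \<sigma>0 \<tau>0 where "\<sigma>0 \<subseteq> \<sigma>" "\<tau>0 \<subseteq> \<tau>" "pseudo_mono \<sigma>0 \<tau>0 \<in> reduced_products n C D"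
    "pseudo_mono \<sigma>0 \<tau>0 \<in> neural_ideal n (C \<union> D)"
proof -
  have JC: "pseudo_mono \<sigma> \<tau> \<in> neural_ideal n C" and JD: "pseudo_mono \<sigma> \<tau> \<in> neural_ideal n D"
    using J_union[OF assms(1-5)] assms(6) by auto
  obtain \<sigma>1 \<tau>1 where s1: "\<sigma>1 \<subseteq> \<sigma>" "\<tau>1 \<subseteq> \<tau>" "pseudo_mono \<sigma>1 \<tau>1 \<in> canonical_form n C"
    using exist_cf[OF assms(1) assms(3-5) JC] by metis
  obtain \<sigma>2 \<tau>2 where s2: "\<sigma>2 \<subseteq> \<sigma>" "\<tau>2 \<subseteq> \<tau>" "pseudo_mono \<sigma>2 \<tau>2 \<in> canonical_form n D"
    using exist_cf[OF assms(2) assms(3-5) JD] by metis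
  have v1: "\<sigma>1 \<subseteq> {1..n}" "\<tau>1 \<subseteq> {1..n}" "\<sigma>1 \<inter> \<tau>1 = {}" using s1 assms(3-5) by auto
  have v2: "\<sigma>2 \<subseteq> {1..n}" "\<tau>2 \<subseteq> {1..n}" "\<sigma>2 \<inter> \<tau>2 = {}" using s2 assms(3-5) by auto
  have d: "(\<sigma>1 \<union> \<sigma>2) \<inter> (\<tau>1 \<union> \<tau>2) = {}" using s1 s2 assms(5) by auto
  have v: "\<sigma>1 \<union> \<sigma>2 \<subseteq> {1..n}" "\<tau>1 \<union> \<tau>2 \<subseteq> {1..n}" using v1 v2 by auto
  have P: "pseudo_mono (\<sigma>1 \<union> \<sigma>2) (\<tau>1 \<union> \<tau>2) \<in> reduced_products n C D"
    by (rule P_intro[OF s1(3) s2(3) v1 v2 d])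
  have "pseudo_mono (\<sigma>1 \<union> \<sigma>2) (\<tau>1 \<union> \<tau>2) \<in> neural_ideal n C"
    by (rule J_mono[OF assms(1) v d _ _ cf_in[OF s1(3)]]) auto
  moreover have "pseudo_mono (\<sigma>1 \<union> \<sigma>2) (\<tau>1 \<union> \<tau>2) \<in> neural_ideal n D"
    by (rule J_mono[OF assms(2) v d _ _ cf_in[OF s2(3)]]) auto
  ultimately have J: "pseudo_mono (\<sigma>1 \<union> \<sigma>2) (\<tau>1 \<union> \<tau>2) \<in> neural_ideal n (C \<union> D)"
    using J_union[OF assms(1,2) v d] by simp
  have "\<sigma>1 \<union> \<sigma>2 \<subseteq> \<sigma>" "\<tau>1 \<union> \<tau>2 \<subseteq> \<tau>" using s1 s2 by auto
  from that[OF this P J] show ?thesis .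
qed

lemma card_lt:
  assumes "finite \<sigma>" "finite \<tau>" "\<sigma>0 \<subseteq> \<sigma>" "\<tau>0 \<subseteq> \<tau>" "\<not> (\<sigma>0 = \<sigma> \<and> \<tau>0 = \<tau>)"
  shows "card \<sigma>0 + card \<tau>0 < card \<sigma> + card \<tau>"
proof -
  have a: "card \<sigma>0 \<le> card \<sigma>" "card \<tau>0 \<le> card \<tau>" using assms by (auto intro: card_mono)
  show ?thesis
  proof (cases "\<sigma>0 = \<sigma>")
    case True
    then have "\<tau>0 \<subset> \<tau>" using assms by auto
    then have "card \<tau>0 < card \<tau>" using assms by (intro psubset_card_mono)
    then show ?thesis using a by linarith
  next
    case False
    then have "\<sigma>0 \<subset> \<sigma>" using assms by auto
    then have "card \<sigma>0 < card \<sigma>" using assms by (intro psubset_card_mono)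
    then show ?thesis using a by linarith
  qed
qed



theorem lemma9:
  fixes n :: nat and C D :: "nat set set"
  assumes "C \<subseteq> cube n" and "D \<subseteq> cube n"
  shows "canonical_form n (C \<union> D) = reduce n ` min_reduced_products n C D"
proof
  have CD: "C \<union> D \<subseteq> cube n" using assms by auto
  show "canonical_form n (C \<union> D) \<subseteq> reduce n ` min_reduced_products n C D"
  proof
    fix x assume x: "x \<in> canonical_form n (C \<union> D)"
    obtain \<sigma> \<tau> where v: "\<sigma> \<subseteq> {1..n}" "\<tau> \<subseteq> {1..n}" "\<sigma> \<inter> \<tau> = {}" and xe: "x = pseudo_mono \<sigma> \<tau>"
      by (rule cf_repr[OF x])
    have f: "finite \<sigma>" "finite \<tau>" using v fin_sub by auto
    have xJ: "pseudo_mono \<sigma> \<tau> \<in> neural_ideal n (C \<union> D)" using cf_in[OF x] xe by simp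
    have xcf: "pseudo_mono \<sigma> \<tau> \<in> canonical_form n (C \<union> D)" using x xe by simp
    have key: "\<sigma>0 = \<sigma> \<and> \<tau>0 = \<tau>"
      if s: "\<sigma>0 \<subseteq> \<sigma>" "\<tau>0 \<subseteq> \<tau>" and J0: "pseudo_mono \<sigma>0 \<tau>0 \<in> neural_ideal n (C \<union> D)" for \<sigma>0 \<tau>0
    proof (rule ccontr)
      assume ne: "\<not> (\<sigma>0 = \<sigma> \<and> \<tau>0 = \<tau>)"
      have v0: "\<sigma>0 \<subseteq> {1..n}" "\<tau>0 \<subseteq> {1..n}" "\<sigma>0 \<inter> \<tau>0 = {}" using s v by auto
      have f0: "finite \<sigma>0" "finite \<tau>0" using v0 fin_sub by auto
      have "card \<sigma>0 + card \<tau>0 < card \<sigma> + card \<tau>" by (rule card_lt[OF f s ne])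
      then have lt: "tdeg (pseudo_mono \<sigma>0 \<tau>0) < tdeg (pseudo_mono \<sigma> \<tau>)"
        by (simp only: tdeg_pm[OF f v(3)] tdeg_pm[OF f0 v0(3)])
      have sp: "pseudo_mono \<sigma> \<tau> = pseudo_mono \<sigma>0 \<tau>0 * pseudo_mono (\<sigma> - \<sigma>0) (\<tau> - \<tau>0)"
        by (rule pm_split[OF f s])
      have q: "pseudo_mono (\<sigma> - \<sigma>0) (\<tau> - \<tau>0) \<in> polys n"
        by (rule pm_polys) (use v in auto)
      have ip: "is_pseudo_monomial n (pseudo_mono \<sigma>0 \<tau>0)"
        unfolding is_pseudo_monomial_def using v0 by blast
      from cf_min[OF xcf ip J0 q sp] lt show False by contradiction
    qed
    obtain \<sigma>0 \<tau>0 where s0: "\<sigma>0 \<subseteq> \<sigma>" "\<tau>0 \<subseteq> \<tau>" and P0: "pseudo_mono \<sigma>0 \<tau>0 \<in> reduced_products n C D"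
      and J0: "pseudo_mono \<sigma>0 \<tau>0 \<in> neural_ideal n (C \<union> D)"
      by (rule below[OF assms v xJ])
    have "\<sigma>0 = \<sigma> \<and> \<tau>0 = \<tau>" by (rule key[OF s0 J0])
    then have xP: "x \<in> reduced_products n C D" using P0 xe by simp
    have xnz: "x \<noteq> 0" using pm_nonzero[OF f v(3)] xe by simp
    have xmin: "\<forall>f\<in>reduced_products n C D. \<forall>g\<in>polys n. g \<noteq> 1 \<longrightarrow> x \<noteq> f * g"
    proof (intro ballI impI notI)
      fix p g assume p: "p \<in> reduced_products n C D" and g: "g \<in> polys n" "g \<noteq> 1" and eq: "x = p * g"
      have pnz: "p \<noteq> 0" using eq xnz by auto
      obtain \<sigma>p \<tau>p where vp: "\<sigma>p \<subseteq> {1..n}" "\<tau>p \<subseteq> {1..n}" "\<sigma>p \<inter> \<tau>p = {}" and pe: "p = pseudo_mono \<sigma>p \<tau>p"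
        and Jp: "pseudo_mono \<sigma>p \<tau>p \<in> neural_ideal n (C \<union> D)"
        by (rule P_elem[OF assms p pnz])
      have fp: "finite \<sigma>p" "finite \<tau>p" using vp fin_sub by auto
      have eq2: "pseudo_mono \<sigma> \<tau> = pseudo_mono \<sigma>p \<tau>p * g" using eq xe pe by simp
      have sub: "\<sigma>p \<subseteq> \<sigma> \<and> \<tau>p \<subseteq> \<tau>"
        by (rule pm_dvd[OF fp f v(3) v(1) vp(2) eq2])
      then have "\<sigma>p = \<sigma> \<and> \<tau>p = \<tau>" using key Jp by blast
      then have "x * 1 = x * g" using eq xe pe by simp
      then have "g = 1" using xnz by simp
      with g(2) show False by contradiction
    qed
    have "x \<in> min_reduced_products n C D"
      unfolding min_reduced_products_def using xP xnz xmin by blast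
    moreover have "reduce n x = x" using reduce_pm[OF v] xe by simp
    ultimately show "x \<in> reduce n ` min_reduced_products n C D" by (metis image_eqI)
  qed
next
  show "reduce n ` min_reduced_products n C D \<subseteq> canonical_form n (C \<union> D)"
  proof
    fix y assume "y \<in> reduce n ` min_reduced_products n C D"
    then obtain h where y: "y = reduce n h" and hM: "h \<in> min_reduced_products n C D" by blast
    have hP: "h \<in> reduced_products n C D" and hnz: "h \<noteq> 0"
      and hmin: "\<forall>f\<in>reduced_products n C D. \<forall>g\<in>polys n. g \<noteq> 1 \<longrightarrow> h \<noteq> f * g"
      using hM unfolding min_reduced_products_def by auto
    obtain \<sigma> \<tau> where v: "\<sigma> \<subseteq> {1..n}" "\<tau> \<subseteq> {1..n}" "\<sigma> \<inter> \<tau> = {}" and he: "h = pseudo_mono \<sigma> \<tau>"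
      and hJ: "pseudo_mono \<sigma> \<tau> \<in> neural_ideal n (C \<union> D)"
      by (rule P_elem[OF assms hP hnz])
    have f: "finite \<sigma>" "finite \<tau>" using v fin_sub by auto
    have ye: "y = pseudo_mono \<sigma> \<tau>" using y he reduce_pm[OF v] by simp
    have ip: "is_pseudo_monomial n (pseudo_mono \<sigma> \<tau>)"
      unfolding is_pseudo_monomial_def using v by blast
    have nomin: "\<not> (\<exists>g h'. is_pseudo_monomial n g \<and> g \<in> neural_ideal n (C \<union> D) \<and>
        tdeg g < tdeg (pseudo_mono \<sigma> \<tau>) \<and> h' \<in> polys n \<and> pseudo_mono \<sigma> \<tau> = g * h')"
    proof
      assume "\<exists>g h'. is_pseudo_monomial n g \<and> g \<in> neural_ideal n (C \<union> D) \<and>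
        tdeg g < tdeg (pseudo_mono \<sigma> \<tau>) \<and> h' \<in> polys n \<and> pseudo_mono \<sigma> \<tau> = g * h'"
      then obtain g h' where g: "is_pseudo_monomial n g" "g \<in> neural_ideal n (C \<union> D)"
        "tdeg g < tdeg (pseudo_mono \<sigma> \<tau>)" "h' \<in> polys n" "pseudo_mono \<sigma> \<tau> = g * h'"
        by (elim exE conjE)
      obtain \<sigma>g \<tau>g where vg: "\<sigma>g \<subseteq> {1..n}" "\<tau>g \<subseteq> {1..n}" "\<sigma>g \<inter> \<tau>g = {}" "g = pseudo_mono \<sigma>g \<tau>g"
        using g(1) unfolding is_pseudo_monomial_def by (elim exE conjE) 
      have fg: "finite \<sigma>g" "finite \<tau>g" using vg fin_sub by auto
      have eq2: "pseudo_mono \<sigma> \<tau> = pseudo_mono \<sigma>g \<tau>g * h'" using g(5) vg(4) by simp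
      have sub: "\<sigma>g \<subseteq> \<sigma> \<and> \<tau>g \<subseteq> \<tau>"
        by (rule pm_dvd[OF fg f v(3) v(1) vg(2) eq2])
      have "tdeg (pseudo_mono \<sigma>g \<tau>g) < tdeg (pseudo_mono \<sigma> \<tau>)" using g(3) vg(4) by simp
      then have lt: "card \<sigma>g + card \<tau>g < card \<sigma> + card \<tau>"
        by (simp only: tdeg_pm[OF fg vg(3)] tdeg_pm[OF f v(3)])
      have gJ: "pseudo_mono \<sigma>g \<tau>g \<in> neural_ideal n (C \<union> D)" using g(2) vg(4) by simp
      obtain \<sigma>0 \<tau>0 where s0: "\<sigma>0 \<subseteq> \<sigma>g" "\<tau>0 \<subseteq> \<tau>g" and P0: "pseudo_mono \<sigma>0 \<tau>0 \<in> reduced_products n C D"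
        by (rule below[OF assms vg(1-3) gJ])
      have s0': "\<sigma>0 \<subseteq> \<sigma>" "\<tau>0 \<subseteq> \<tau>" using s0 sub by auto
      have f0: "finite \<sigma>0" "finite \<tau>0" using s0 fg finite_subset by auto
      have ne: "\<not> (\<sigma>0 = \<sigma> \<and> \<tau>0 = \<tau>)"
      proof
        assume "\<sigma>0 = \<sigma> \<and> \<tau>0 = \<tau>"
        then have "card \<sigma> \<le> card \<sigma>g" "card \<tau> \<le> card \<tau>g" using s0 fg by (auto intro: card_mono)
        with lt show False by linarith
      qed
      have sp: "pseudo_mono \<sigma> \<tau> = pseudo_mono \<sigma>0 \<tau>0 * pseudo_mono (\<sigma> - \<sigma>0) (\<tau> - \<tau>0)"
        by (rule pm_split[OF f s0'])
      have q: "pseudo_mono (\<sigma> - \<sigma>0) (\<tau> - \<tau>0) \<in> polys n"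
        by (rule pm_polys) (use v in auto)
      have q1: "pseudo_mono (\<sigma> - \<sigma>0) (\<tau> - \<tau>0) \<noteq> 1"
      proof
        assume "pseudo_mono (\<sigma> - \<sigma>0) (\<tau> - \<tau>0) = 1"
        then have "\<sigma> - \<sigma>0 = {} \<and> \<tau> - \<tau>0 = {}"
          by (rule pm_eq_one[rotated 5]) (use f v in auto)
        then show False using ne s0' by auto
      qed
      have "h \<noteq> pseudo_mono \<sigma>0 \<tau>0 * pseudo_mono (\<sigma> - \<sigma>0) (\<tau> - \<tau>0)"
        using hmin P0 q q1 by blast
      then show False using sp he by simp
    qed
    have "pseudo_mono \<sigma> \<tau> \<in> canonical_form n (C \<union> D)"
      unfolding canonical_form_def mem_Collect_eq using ip hJ nomin by (intro conjI)
    then show "y \<in> canonical_form n (C \<union> D)" using ye by simp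
  qed
qed

end
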